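(* Let $0\le l\le\nu+\mu$ and suppose there exists $l_0\le l$ such that $|S_l^{l_0}(0)|=1$. Then $0\in T_l(M/K)$, i.e. there exists $l_1\le l$ with $|S_l^{l_1}(0)|=1$ and $S_l^a(0)=\varnothing$ for all $0\le a<l_1$.
   Context: Let $p$ be a prime and $K$ a field complete with respect to a discrete valuation whose residue field is perfect of characteristic $p$; fix a separable closure $K^{sep}$; $v_p$ is the $p$-adic valuation on $\mathbb{Z}$. $L/K$ is a finite totally ramified subextension of $K^{sep}/K$ of degree $n>1$ and $M/L$ a finite totally ramified subextension of $K^{sep}/L$ of degree $m>1$; $\nu=v_p(n)$, $\mu=v_p(m)$. For any such totally ramified extension $E/F$ of degree $N>1$ with $\eta=v_p(N)$, the indices of inseparability $i_0,\dots,i_\eta$ are defined by: choose uniformizers $\pi_F,\pi_E$, let $\hat{\mathcal{F}}(X)=\sum_{h\ge0}a_hX^{h+N}$ be the unique series with coefficients in the Teichmüller representatives of the residue field such that $\hat{\mathcal{F}}(\pi_E)=\pi_F$, put $\tilde{\imath}_j=\min\{h\ge0:v_p(h+N)\le j,\ a_h\ne0\}$ (or $\infty$), $i_\eta=0$ and $i_j=\min\{\tilde{\imath}_j,i_{j+1}+v_E(p)\}$ for $j=\eta-1,\dots,0$ ($v_E$ normalized with $v_E(E^\times)=\mathbb{Z}$, $v_E(p)=\infty$ in characteristic $p$). Set $\tilde{\phi}_{E/F}^j(x)=i_j+p^jx$ and $\phi_{E/F}^j(x)=\min\{\tilde{\phi}_{E/F}^{j_0}(x):0\le j_0\le j\}$.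 Let $i_j$ be the indices of $L/K$; define $\tilde{\phi}_{L/K}^{j,m}(x)=mi_j+p^jx$ and $\phi_{L/K}^{j,m}(x)=m\phi_{L/K}^j(x/m)$. For $0\le l\le\nu+\mu$ let $\Omega_l=\{(j,k):0\le j\le\nu,\ 0\le k\le\mu,\ j+k=l\}$, $\lambda_{M/K}^l(x)=\min\{\phi_{L/K}^{j,m}(\phi_{M/L}^k(x)):(j,k)\in\Omega_l\}$, and for $0\le a\le l$, $S_l^a(x)=\{(j,k)\in\Omega_a:\tilde{\phi}_{L/K}^{j,m}(\tilde{\phi}_{M/L}^k(x))=\lambda_{M/K}^l(x)\}$. Finally $T_l(M/K)=\{t\ge0:\exists\,l_1\le l\text{ with }|S_l^{l_1}(t)|=1\text{ and }|S_l^a(t)|=0\text{ for }0\le a<l_1\}$. *)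

theory Defs
  imports Complex_Main "HOL-Computational_Algebra.Primes" "HOL-Library.Extended_Nat"
begin

text \<open>
  A finite totally ramified extension E/F of degree N is represented by the data that the
  indices of inseparability depend on:
    N  : the degree,
    A  : the support {h. a_h \<noteq> 0} of the series  F(X) = sum_h a_h X^(h+N)  with F(pi_E) = pi_F,
    vp : v_E(p) \<in> enat  (\<infinity> in characteristic p).
  The p-adic valuation v_p is multiplicity p.
\<close>

definition tilde_idx :: "nat \<Rightarrow> nat \<Rightarrow> nat set \<Rightarrow> nat \<Rightarrow> enat" where
  "tilde_idx p N A j =
     (if \<exists>h\<in>A. multiplicity p (h + N) \<le> j
      then enat (LEAST h. h \<in> A \<and> multiplicity p (h + N) \<le> j) else \<infinity>)"

text \<open>idx_aux k is the index i_(eta-k), computed downward from i_eta = 0.\<close>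
primrec idx_aux :: "nat \<Rightarrow> nat \<Rightarrow> nat set \<Rightarrow> enat \<Rightarrow> nat \<Rightarrow> enat" where
  "idx_aux p N A vp 0 = 0"
| "idx_aux p N A vp (Suc k) =
     min (tilde_idx p N A (multiplicity p N - Suc k)) (idx_aux p N A vp k + vp)"

definition idx_e :: "nat \<Rightarrow> nat \<Rightarrow> nat set \<Rightarrow> enat \<Rightarrow> nat \<Rightarrow> enat" where
  "idx_e p N A vp j = idx_aux p N A vp (multiplicity p N - j)"

text \<open>The same, as a natural number (the indices are finite for separable extensions).\<close>
definition idx :: "nat \<Rightarrow> nat \<Rightarrow> nat set \<Rightarrow> enat \<Rightarrow> nat \<Rightarrow> nat" where
  "idx p N A vp j = the_enat (idx_e p N A vp j)"

definition phit :: "nat \<Rightarrow> nat \<Rightarrow> nat set \<Rightarrow> enat \<Rightarrow> nat \<Rightarrow> real \<Rightarrow> real" where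
  "phit p N A vp j x = real (idx p N A vp j) + real p ^ j * x"

definition phi :: "nat \<Rightarrow> nat \<Rightarrow> nat set \<Rightarrow> enat \<Rightarrow> nat \<Rightarrow> real \<Rightarrow> real" where
  "phi p N A vp j x = Min ((\<lambda>j0. phit p N A vp j0 x) ` {..j})"

definition phit_m :: "nat \<Rightarrow> nat \<Rightarrow> nat set \<Rightarrow> enat \<Rightarrow> nat \<Rightarrow> nat \<Rightarrow> real \<Rightarrow> real" where
  "phit_m p N A vp m j x = real m * real (idx p N A vp j) + real p ^ j * x"

definition phi_m :: "nat \<Rightarrow> nat \<Rightarrow> nat set \<Rightarrow> enat \<Rightarrow> nat \<Rightarrow> nat \<Rightarrow> real \<Rightarrow> real" where
  "phi_m p N A vp m j x = real m * phi p N A vp j (x / real m)"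

definition Omega :: "nat \<Rightarrow> nat \<Rightarrow> nat \<Rightarrow> (nat \<times> nat) set" where
  "Omega nu mu l = {(j, k). j \<le> nu \<and> k \<le> mu \<and> j + k = l}"

text \<open>Tower M/L/K: L/K given by (n, AL, vL), M/L given by (m, AM, vM).\<close>

definition lambdaMK ::
  "nat \<Rightarrow> nat \<Rightarrow> nat set \<Rightarrow> enat \<Rightarrow> nat \<Rightarrow> nat set \<Rightarrow> enat \<Rightarrow> nat \<Rightarrow> real \<Rightarrow> real" where
  "lambdaMK p n AL vL m AM vM l x =
     Min ((\<lambda>(j, k). phi_m p n AL vL m j (phi p m AM vM k x))
            ` Omega (multiplicity p n) (multiplicity p m) l)"

definition S_set ::
  "nat \<Rightarrow> nat \<Rightarrow> nat set \<Rightarrow> enat \<Rightarrow> nat \<Rightarrow> nat set \<Rightarrow> enat \<Rightarrow> nat \<Rightarrow> nat \<Rightarrow> real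
     \<Rightarrow> (nat \<times> nat) set" where
  "S_set p n AL vL m AM vM l a x =
     {(j, k) \<in> Omega (multiplicity p n) (multiplicity p m) a.
        phit_m p n AL vL m j (phit p m AM vM k x) = lambdaMK p n AL vL m AM vM l x}"

definition T_set ::
  "nat \<Rightarrow> nat \<Rightarrow> nat set \<Rightarrow> enat \<Rightarrow> nat \<Rightarrow> nat set \<Rightarrow> enat \<Rightarrow> nat \<Rightarrow> real set" where
  "T_set p n AL vL m AM vM l =
     {t. t \<ge> 0 \<and> (\<exists>l1 \<le> l. card (S_set p n AL vL m AM vM l l1 t) = 1 \<and>
                        (\<forall>a < l1. card (S_set p n AL vL m AM vM l a t) = 0))}"

end

theory Submission
  imports Defs
begin

lemma tilde_mono:
  assumes "j \<le> j'"
  shows "tilde_idx p N A j' \<le> tilde_idx p N A j"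
proof (cases "\<exists>h\<in>A. multiplicity p (h + N) \<le> j")
  case True
  then obtain h where h: "h \<in> A" "multiplicity p (h + N) \<le> j" by blast
  let ?L = "LEAST h. h \<in> A \<and> multiplicity p (h + N) \<le> j"
  have L: "?L \<in> A \<and> multiplicity p (?L + N) \<le> j"
    by (rule LeastI[of _ h]) (use h in auto)
  hence ex': "\<exists>h\<in>A. multiplicity p (h + N) \<le> j'" using assms by (intro bexI[of _ ?L]) auto
  have "(LEAST h. h \<in> A \<and> multiplicity p (h + N) \<le> j') \<le> ?L"
    by (rule Least_le) (use L assms in auto)
  then show ?thesis using True ex' unfolding tilde_idx_def by simp
next
  case False
  then show ?thesis unfolding tilde_idx_def by simp
qed

lemma aux_Suc_mono: "idx_aux p N A vp k \<le> idx_aux p N A vp (Suc k)"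
proof (cases k)
  case 0
  then show ?thesis by simp
next
  case (Suc k')
  have "idx_aux p N A vp (Suc k') \<le> tilde_idx p N A (multiplicity p N - Suc k')"
    by simp
  also have "\<dots> \<le> tilde_idx p N A (multiplicity p N - Suc (Suc k'))"
    by (rule tilde_mono) simp
  finally have 1: "idx_aux p N A vp (Suc k') \<le> tilde_idx p N A (multiplicity p N - Suc (Suc k'))" .
  have 2: "idx_aux p N A vp (Suc k') \<le> idx_aux p N A vp (Suc k') + vp" by simp
  show ?thesis using 1 2 Suc by simp
qed

lemma aux_mono: "k \<le> k' \<Longrightarrow> idx_aux p N A vp k \<le> idx_aux p N A vp k'"
proof (induction k' rule: dec_induct)
  case base then show ?case by simp
next
  case (step k')
  then show ?case using aux_Suc_mono[of p N A vp k'] order_trans by blast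
qed

lemma fin_le: "(x::enat) \<le> y \<Longrightarrow> y \<noteq> \<infinity> \<Longrightarrow> x \<noteq> \<infinity>"
  by (cases x; cases y) auto

lemma the_enat_mono: "x \<le> y \<Longrightarrow> y \<noteq> \<infinity> \<Longrightarrow> the_enat x \<le> the_enat y"
  by (cases x; cases y) auto

lemma idx_mono:
  assumes fin: "idx_e p N A vp 0 \<noteq> \<infinity>" and j: "Suc j \<le> multiplicity p N"
  shows "idx p N A vp (Suc j) \<le> idx p N A vp j"
proof -
  let ?e = "multiplicity p N"
  have "idx_aux p N A vp (?e - j) \<le> idx_aux p N A vp ?e" by (rule aux_mono) simp
  hence f: "idx_aux p N A vp (?e - j) \<noteq> \<infinity>" using fin_le fin by (simp add: idx_e_def)
  have "idx_aux p N A vp (?e - Suc j) \<le> idx_aux p N A vp (?e - j)" by (rule aux_mono) simp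
  thus ?thesis unfolding idx_def idx_e_def using the_enat_mono f by blast
qed

lemma idx_top: "idx p N A vp (multiplicity p N) = 0"
  unfolding idx_def idx_e_def by (simp add: zero_enat_def)

lemma idx_pos:
  assumes fin: "idx_e p N A vp 0 \<noteq> \<infinity>" and j: "j < multiplicity p N"
    and v: "vp \<ge> 1" and A0: "0 \<in> A" and p: "prime p" and N: "N > 0"
  shows "idx p N A vp j \<ge> 1"
proof -
  let ?e = "multiplicity p N"
  obtain k' where k': "?e - j = Suc k'" using j by (metis Suc_diff_Suc)
  have "idx_aux p N A vp (?e - j) \<le> idx_aux p N A vp ?e" by (rule aux_mono) simp
  hence f: "idx_aux p N A vp (?e - j) \<noteq> \<infinity>" using fin_le fin by (simp add: idx_e_def)
  have jj: "?e - Suc k' < ?e" using k' j by simp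
  have t: "tilde_idx p N A (?e - Suc k') \<ge> 1"
  proof (cases "\<exists>h\<in>A. multiplicity p (h + N) \<le> ?e - Suc k'")
    case True
    then obtain h where h: "h \<in> A" "multiplicity p (h + N) \<le> ?e - Suc k'" by blast
    let ?L = "LEAST h. h \<in> A \<and> multiplicity p (h + N) \<le> ?e - Suc k'"
    have L: "?L \<in> A \<and> multiplicity p (?L + N) \<le> ?e - Suc k'"
      by (rule LeastI[of _ h]) (use h in auto)
    have "?L \<noteq> 0"
    proof
      assume z: "?L = 0"
      have "multiplicity p (?L + N) \<le> ?e - Suc k'" using L by blast
      hence "multiplicity p N \<le> ?e - Suc k'" using z by simp
      thus False using jj by simp
    qed
    then show ?thesis using True unfolding tilde_idx_def by (simp add: one_enat_def)
  next
    case False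
    then show ?thesis unfolding tilde_idx_def by simp
  qed
  have "idx_aux p N A vp k' + vp \<ge> 1" using v
    by (metis add.commute le_iff_add order_trans)
  hence "idx_aux p N A vp (?e - j) \<ge> 1" using t k' by simp
  thus ?thesis unfolding idx_def idx_e_def using f
    by (cases "idx_aux p N A vp (?e - j)") (auto simp: one_enat_def)
qed

lemma comb_step:
  fixes f :: "nat \<Rightarrow> nat \<Rightarrow> real"
  assumes A: "\<And>j k. j \<le> nu \<Longrightarrow> k \<le> mu \<Longrightarrow> j + k \<le> l \<Longrightarrow> lam \<le> f j k"
    and B1: "\<And>j k. k < mu \<Longrightarrow> f j (Suc k) \<le> f j k"
    and B2: "\<And>j. j < nu \<Longrightarrow> f (Suc j) mu \<le> f j mu"
    and C: "\<And>j k. k < mu \<Longrightarrow> f j mu < f j k"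
    and l: "l \<le> nu + mu" and a: "a < l"
  shows "card {(j,k) \<in> Omega nu mu a. f j k = lam}
       \<le> card {(j,k) \<in> Omega nu mu (Suc a). f j k = lam}"
proof -
  let ?S = "\<lambda>a. {(j,k) \<in> Omega nu mu a. f j k = lam}"
  define s where "s = (\<lambda>(j::nat,k::nat). if k < mu then (j, Suc k) else (Suc j, k))"
  have fin: "finite (?S b)" for b
  proof -
    have "?S b \<subseteq> {..nu} \<times> {..mu}" unfolding Omega_def by auto
    thus ?thesis by (rule finite_subset) auto
  qed
  have img: "s ` ?S a \<subseteq> ?S (Suc a)"
  proof
    fix y assume "y \<in> s ` ?S a"
    then obtain j k where jk: "(j,k) \<in> ?S a" and y: "y = s (j,k)" by auto
    have jk': "j \<le> nu" "k \<le> mu" "j + k = a" "f j k = lam" using jk unfolding Omega_def by auto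
    show "y \<in> ?S (Suc a)"
    proof (cases "k < mu")
      case True
      have "lam \<le> f j (Suc k)" using A[of j "Suc k"] jk' True a by auto
      moreover have "f j (Suc k) \<le> lam" using B1[OF True, of j] jk' by simp
      ultimately show ?thesis using y True jk' unfolding s_def Omega_def by auto
    next
      case False
      hence km: "k = mu" using jk' by simp
      hence jn: "j < nu" using jk' a l by simp
      have "lam \<le> f (Suc j) mu" using A[of "Suc j" mu] jk' km jn a by auto
      moreover have "f (Suc j) mu \<le> lam" using B2[OF jn] jk' km by simp
      ultimately show ?thesis using y km jk' jn unfolding s_def Omega_def by auto
    qed
  qed
  have inj: "inj_on s (?S a)"
  proof (rule inj_onI)
    fix x y assume x: "x \<in> ?S a" and y: "y \<in> ?S a" and e: "s x = s y"
    obtain j k where xx: "x = (j,k)" by (cases x)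
    obtain j' k' where yy: "y = (j',k')" by (cases y)
    have X: "j \<le> nu" "k \<le> mu" "j + k = a" "f j k = lam" using x xx unfolding Omega_def by auto
    have Y: "j' \<le> nu" "k' \<le> mu" "j' + k' = a" "f j' k' = lam" using y yy unfolding Omega_def by auto
    have bad: False if "k < mu" "\<not> k' < mu" "(j, Suc k) = (Suc j', k')"
      and X: "j \<le> nu" "k \<le> mu" "j + k = a" "f j k = lam"
      and Y: "j' \<le> nu" "k' \<le> mu" "j' + k' = a" "f j' k' = lam" for j k j' k'
    proof -
      have jm: "j + mu \<le> l" "j \<le> nu" using that a by auto
      have "lam \<le> f j mu" using A[OF jm(2) order_refl jm(1)] .
      moreover have "f j mu < f j k" using C that by auto
      ultimately show False using that by simp
    qed
    show "x = y"
    proof (cases "k < mu"; cases "k' < mu")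
      assume "k < mu" "k' < mu" thus ?thesis using e xx yy unfolding s_def by auto
    next
      assume "\<not> k < mu" "\<not> k' < mu" thus ?thesis using e xx yy unfolding s_def by auto
    next
      assume h: "k < mu" "\<not> k' < mu"
      thus ?thesis using e xx yy bad[OF h _ X Y] unfolding s_def by auto
    next
      assume h: "\<not> k < mu" "k' < mu"
      thus ?thesis using e xx yy bad[OF h(2) h(1) _ Y X] unfolding s_def by auto
    qed
  qed
  show ?thesis using card_inj_on_le[OF inj img fin] .
qed

lemma comb_mono:
  fixes f :: "nat \<Rightarrow> nat \<Rightarrow> real"
  assumes A: "\<And>j k. j \<le> nu \<Longrightarrow> k \<le> mu \<Longrightarrow> j + k \<le> l \<Longrightarrow> lam \<le> f j k"
    and B1: "\<And>j k. k < mu \<Longrightarrow> f j (Suc k) \<le> f j k"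
    and B2: "\<And>j. j < nu \<Longrightarrow> f (Suc j) mu \<le> f j mu"
    and C: "\<And>j k. k < mu \<Longrightarrow> f j mu < f j k"
    and l: "l \<le> nu + mu" and ab: "a \<le> b" and b: "b \<le> l"
  shows "card {(j,k) \<in> Omega nu mu a. f j k = lam}
       \<le> card {(j,k) \<in> Omega nu mu b. f j k = lam}"
  using ab b
proof (induction b rule: dec_induct)
  case base then show ?case by simp
next
  case (step b)
  have "card {(j,k) \<in> Omega nu mu b. f j k = lam} \<le> card {(j,k) \<in> Omega nu mu (Suc b). f j k = lam}"
    by (rule comb_step[where f=f and lam=lam and nu=nu and mu=mu and l=l, OF A B1 B2 C l]) (use step in auto)
  then show ?case using step by auto
qed

theorem lemma3p5:
  fixes p n m l :: nat and AL AM :: "nat set" and eK :: enat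
  assumes "prime p" and "n > 1" and "m > 1"
    and "eK \<ge> 1"
    and "0 \<in> AL" and "0 \<in> AM"
    and "idx_e p n AL (of_nat n * eK) 0 \<noteq> \<infinity>"
    and "idx_e p m AM (of_nat (m * n) * eK) 0 \<noteq> \<infinity>"
    and "l \<le> multiplicity p n + multiplicity p m"
    and "\<exists>l0 \<le> l. card (S_set p n AL (of_nat n * eK) m AM (of_nat (m * n) * eK) l l0 0) = 1"
  shows "0 \<in> T_set p n AL (of_nat n * eK) m AM (of_nat (m * n) * eK) l"
proof -
  define vL where "vL = (of_nat n * eK :: enat)"
  define vM where "vM = (of_nat (m * n) * eK :: enat)"
  define nu where "nu = multiplicity p n"
  define mu where "mu = multiplicity p m"
  define f where "f = (\<lambda>j k. phit_m p n AL vL m j (phit p m AM vM k 0))"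
  define lam where "lam = lambdaMK p n AL vL m AM vM l 0"
  have Seq: "S_set p n AL vL m AM vM l a 0 = {(j,k) \<in> Omega nu mu a. f j k = lam}" for a
    unfolding S_set_def f_def lam_def nu_def mu_def by simp
  have fE: "f j k = real m * real (idx p n AL vL j) + real p ^ j * real (idx p m AM vM k)" for j k
    unfolding f_def phit_m_def phit_def by simp
  have mpos: "real m > 0" using assms by simp
  have ppos: "real p > 0" using assms prime_gt_0_nat by simp
  have finOm: "finite (Omega nu mu l)"
  proof -
    have "Omega nu mu l \<subseteq> {..nu} \<times> {..mu}" unfolding Omega_def by auto
    thus ?thesis by (rule finite_subset) auto
  qed
  have A: "lam \<le> f j0 k0" if "j0 \<le> nu" "k0 \<le> mu" "j0 + k0 \<le> l" for j0 k0
  proof -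
    define J where "J = min nu (l - k0)"
    define K where "K = l - J"
    have JK: "(J, K) \<in> Omega nu mu l" "j0 \<le> J" "k0 \<le> K"
      using that assms(9) unfolding J_def K_def Omega_def nu_def mu_def by auto
    have "lam \<le> phi_m p n AL vL m J (phi p m AM vM K 0)"
      unfolding lam_def lambdaMK_def nu_def[symmetric] mu_def[symmetric]
      by (rule Min_le) (use finOm JK in force)+
    also have "phi p m AM vM K 0 \<le> phit p m AM vM k0 0"
      unfolding phi_def by (rule Min_le) (use JK in auto)
    hence "phi_m p n AL vL m J (phi p m AM vM K 0) \<le>
        real m * phit p n AL vL j0 (phit p m AM vM k0 0 / real m)"
    proof -
      assume le: "phi p m AM vM K 0 \<le> phit p m AM vM k0 0"
      have "phi p n AL vL J (phi p m AM vM K 0 / real m) \<le> phit p n AL vL j0 (phi p m AM vM K 0 / real m)"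
        unfolding phi_def by (rule Min_le) (use JK in auto)
      also have "\<dots> \<le> phit p n AL vL j0 (phit p m AM vM k0 0 / real m)"
      proof -
        have le': "phi p m AM vM K 0 \<le> real (idx p m AM vM k0)" using le by (simp add: phit_def)
        have "real p ^ j0 * phi p m AM vM K 0 \<le> real p ^ j0 * real (idx p m AM vM k0)"
          using le' ppos by (simp add: mult_left_mono)
        thus ?thesis unfolding phit_def using mpos by (simp add: divide_right_mono)
      qed
      finally show ?thesis unfolding phi_m_def using mpos by simp
    qed
    also have "real m * phit p n AL vL j0 (phit p m AM vM k0 0 / real m) = f j0 k0"
      unfolding f_def phit_m_def phit_def using mpos by (simp add: algebra_simps)
    finally show ?thesis .
  qed
  have n1: "(1::enat) \<le> of_nat n" and m1: "(1::enat) \<le> of_nat (m*n)"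
    using assms by (auto simp: of_nat_eq_enat one_enat_def)
  have v1: "vL \<ge> 1" "vM \<ge> 1"
  proof -
    have "(1::enat) * 1 \<le> of_nat n * eK" by (rule mult_mono) (use n1 assms(4) in auto)
    thus "vL \<ge> 1" unfolding vL_def by simp
    have "(1::enat) * 1 \<le> of_nat (m*n) * eK" by (rule mult_mono) (use m1 assms(4) in auto)
    thus "vM \<ge> 1" unfolding vM_def by simp
  qed
  have fL: "idx_e p n AL vL 0 \<noteq> \<infinity>" and fM: "idx_e p m AM vM 0 \<noteq> \<infinity>"
    using assms unfolding vL_def vM_def by auto
  have B1: "f j (Suc k) \<le> f j k" if "k < mu" for j k
  proof -
    have "idx p m AM vM (Suc k) \<le> idx p m AM vM k"
      by (rule idx_mono[OF fM]) (use that mu_def in auto)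
    thus ?thesis unfolding fE using ppos by (simp add: mult_left_mono)
  qed
  have B2: "f (Suc j) mu \<le> f j mu" if "j < nu" for j
  proof -
    have "idx p n AL vL (Suc j) \<le> idx p n AL vL j"
      by (rule idx_mono[OF fL]) (use that nu_def in auto)
    thus ?thesis unfolding fE mu_def using mpos by (simp add: idx_top)
  qed
  have C: "f j mu < f j k" if "k < mu" for j k
  proof -
    have "idx p m AM vM k \<ge> 1"
      by (rule idx_pos[OF fM _ v1(2) assms(6) assms(1)]) (use that mu_def assms in auto)
    thus ?thesis unfolding fE mu_def using ppos by (simp add: idx_top)
  qed
  have l: "l \<le> nu + mu" using assms nu_def mu_def by simp
  obtain l0 where l0: "l0 \<le> l" "card {(j,k) \<in> Omega nu mu l0. f j k = lam} = 1"
  proof -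
    from assms(10) obtain l0 where "l0 \<le> l" "card (S_set p n AL vL m AM vM l l0 0) = 1"
      unfolding vL_def vM_def by blast
    thus ?thesis using that unfolding Seq by blast
  qed
  let ?S = "\<lambda>a. {(j,k) \<in> Omega nu mu a. f j k = lam}"
  have ne: "\<exists>a. ?S a \<noteq> {}" 
  proof -
    have "?S l0 \<noteq> {}"
    proof
      assume "?S l0 = {}"
      hence "card (?S l0) = 0" by (simp only: card.empty)
      with l0(2) show False by simp
    qed
    thus ?thesis by blast
  qed
  define l1 where "l1 = (LEAST a. ?S a \<noteq> {})"
  have l1ne: "?S l1 \<noteq> {}" unfolding l1_def using ne by (rule LeastI_ex)
  have l1le: "l1 \<le> l0" unfolding l1_def
    by (rule Least_le) (use l0 in force)
  have below: "card (?S a) = 0" if "a < l1" for a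
  proof -
    have "\<not> ?S a \<noteq> {}" using not_less_Least[OF that[unfolded l1_def]] .
    hence "?S a = {}" by blast
    thus ?thesis by (simp only: card.empty)
  qed
  have finS: "finite (?S l1)"
  proof -
    have "?S l1 \<subseteq> {..nu} \<times> {..mu}" unfolding Omega_def by auto
    thus ?thesis by (rule finite_subset) auto
  qed
  have "card (?S l1) \<le> card (?S l0)"
    by (rule comb_mono[where f=f and lam=lam and nu=nu and mu=mu and l=l and a=l1 and b=l0])
       (use A B1 B2 C l l1le l0(1) in auto)
  hence "card (?S l1) \<le> 1" using l0(2) by simp
  moreover have "card (?S l1) \<ge> 1" using finS l1ne by (simp add: Suc_le_eq card_gt_0_iff)
  ultimately have c1: "card (?S l1) = 1" by simp
  have "\<exists>l1 \<le> l. card (S_set p n AL vL m AM vM l l1 0) = 1 \<and>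
           (\<forall>a < l1. card (S_set p n AL vL m AM vM l a 0) = 0)"
    using c1 below l1le l0(1) Seq by (intro exI[of _ l1]) auto
  thus ?thesis unfolding T_set_def vL_def vM_def by simp
qed

end
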